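(* Let $X$ be an uncountable regular topological space which is open Whyburn and $\mathcal{K}$-Lindel\"{o}f. Then $X$ is a Lusin space.
   Context: A space $X$ is open Whyburn if for every open set $A\subseteq X$ and every point $x\in\overline{A}\setminus A$ there is an open set $B\subseteq A$ with $\overline{B}\setminus A=\{x\}$. $\mathcal{K}$ denotes the collection of all families $\mathcal{U}$ of open subsets of $X$ such that $X=\bigcup\{\overline{U}:U\in\mathcal{U}\}$. $X$ is $\mathcal{K}$-Lindel\"{o}f if every $\mathcal{U}\in\mathcal{K}$ has a countable subfamily belonging to $\mathcal{K}$. A Hausdorff space $X$ is a Lusin space (in the sense of Kunen) if (a) every nowhere dense subset of $X$ is countable, (b) $X$ has at most countably many isolated points, and (c) $X$ is uncountable. *)

theory Defs
  imports "HOL-Analysis.Analysis"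
begin

definition open_Whyburn :: "'a topology \<Rightarrow> bool" where
  "open_Whyburn X \<longleftrightarrow>
     (\<forall>A x. openin X A \<and> x \<in> X closure_of A - A \<longrightarrow>
        (\<exists>B. openin X B \<and> B \<subseteq> A \<and> X closure_of B - A = {x}))"

definition K_family :: "'a topology \<Rightarrow> 'a set set \<Rightarrow> bool" where
  "K_family X \<U> \<longleftrightarrow> (\<forall>U\<in>\<U>. openin X U) \<and> topspace X = (\<Union>U\<in>\<U>. X closure_of U)"

definition K_Lindelof :: "'a topology \<Rightarrow> bool" where
  "K_Lindelof X \<longleftrightarrow>
     (\<forall>\<U>. K_family X \<U> \<longrightarrow> (\<exists>\<V>\<subseteq>\<U>. countable \<V> \<and> K_family X \<V>))"

definition nowhere_dense_in :: "'a topology \<Rightarrow> 'a set \<Rightarrow> bool" where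
  "nowhere_dense_in X S \<longleftrightarrow> S \<subseteq> topspace X \<and> X interior_of (X closure_of S) = {}"

definition Lusin_space :: "'a topology \<Rightarrow> bool" where
  "Lusin_space X \<longleftrightarrow> Hausdorff_space X
     \<and> (\<forall>S. nowhere_dense_in X S \<longrightarrow> countable S)
     \<and> countable {x \<in> topspace X. openin X {x}}
     \<and> uncountable (topspace X)"

end

theory Submission
  imports Defs
begin

lemma bij_self_times:
  assumes "infinite (A::'a set)"
  obtains f where "bij_betw f (A \<times> A) A"
  using card_of_Times_same_infinite[OF assms] card_of_ordIso by blast

lemma regular_closed_nbhd:
  assumes "regular_space X" "openin X A" "y \<in> A"
  shows "\<exists>V. openin X V \<and> y \<in> V \<and> X closure_of V \<subseteq> A"
proof -
  have "closedin X (topspace X - A)" using assms(2) by blast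
  moreover have "y \<in> topspace X - (topspace X - A)" using assms openin_subset by fastforce
  ultimately obtain U V where UV: "openin X U" "openin X V" "y \<in> U" "topspace X - A \<subseteq> V" "disjnt U V"
    using assms(1) unfolding regular_space_def by metis
  have "X closure_of U \<inter> V = {}"
    using openin_Int_closure_of_eq_empty[OF UV(2), of U] UV(5) by (auto simp: disjnt_def)
  hence "X closure_of U \<subseteq> A" using UV(4) closure_of_subset_topspace by fastforce
  thus ?thesis using UV by blast
qed

lemma nowhere_dense_countable:
  fixes X :: "'a topology"
  assumes reg: "regular_space X" and Wh: "open_Whyburn X" and K: "K_Lindelof X"
    and S: "nowhere_dense_in X S"
  shows "countable S"
proof -
  define C where "C = X closure_of S"
  define A where "A = topspace X - C"
  have SC: "S \<subseteq> C" using S unfolding C_def nowhere_dense_in_def by (simp add: closure_of_subset)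
  have Aopen: "openin X A" unfolding A_def C_def by (simp add: openin_diff)
  have clA: "X closure_of A = topspace X"
    unfolding A_def closure_of_complement using S unfolding nowhere_dense_in_def C_def by simp
  have Ctop: "C \<subseteq> topspace X" unfolding C_def by (rule closure_of_subset_topspace)
  have "\<forall>x\<in>C. \<exists>B. openin X B \<and> B \<subseteq> A \<and> X closure_of B - A = {x}"
  proof
    fix x assume xC: "x \<in> C"
    have "x \<notin> A" unfolding A_def using xC by simp
    moreover have "x \<in> X closure_of A" unfolding clA using xC Ctop by (rule subsetD[rotated])
    ultimately have xin: "x \<in> X closure_of A - A" by (rule DiffI[rotated])
    show "\<exists>B. openin X B \<and> B \<subseteq> A \<and> X closure_of B - A = {x}"
      by (rule Wh[unfolded open_Whyburn_def, rule_format, OF conjI[OF Aopen xin]])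
  qed
  then obtain B where B: "\<And>x. x \<in> C \<Longrightarrow> openin X (B x) \<and> B x \<subseteq> A \<and> X closure_of (B x) - A = {x}"
    by metis
  define U where "U = B ` C \<union> {V. openin X V \<and> X closure_of V \<subseteq> A}"
  have KU: "K_family X U"
    unfolding K_family_def
  proof
    show "\<forall>U\<in>U. openin X U" unfolding U_def using B by auto
    show "topspace X = (\<Union>U\<in>U. X closure_of U)"
    proof
      show "(\<Union>U\<in>U. X closure_of U) \<subseteq> topspace X" using closure_of_subset_topspace by fast
      show "topspace X \<subseteq> (\<Union>U\<in>U. X closure_of U)"
      proof
        fix y assume y: "y \<in> topspace X"
        show "y \<in> (\<Union>U\<in>U. X closure_of U)"
        proof (cases "y \<in> C")
          case True
          then show ?thesis using B[OF True] unfolding U_def by blast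
        next
          case False
          hence "y \<in> A" using y unfolding A_def by simp
          then obtain V where "openin X V" "y \<in> V" "X closure_of V \<subseteq> A"
            using regular_closed_nbhd[OF reg Aopen] by blast
          moreover have "y \<in> X closure_of V"
            using closure_of_subset[OF openin_subset[OF calculation(1)]] calculation(2) by (rule subsetD)
          ultimately show ?thesis unfolding U_def by blast
        qed
      qed
    qed
  qed
  then obtain V where V: "V \<subseteq> U" "countable V" "K_family X V"
    using K unfolding K_Lindelof_def by blast
  have sub: "C \<subseteq> (\<Union>W\<in>V. X closure_of W - A)"
  proof
    fix r assume r: "r \<in> C"
    have "topspace X = (\<Union>W\<in>V. X closure_of W)" using V(3) unfolding K_family_def by (rule conjunct2)
    hence "r \<in> (\<Union>W\<in>V. X closure_of W)" using r Ctop by blast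
    then obtain W where "W \<in> V" "r \<in> X closure_of W" by (rule UN_E)
    moreover have "r \<notin> A" unfolding A_def using r by simp
    ultimately show "r \<in> (\<Union>W\<in>V. X closure_of W - A)" by blast
  qed
  have "countable (X closure_of W - A)" if "W \<in> V" for W
  proof -
    have "W \<in> U" using that V by auto
    then consider x where "x \<in> C" "W = B x" | "X closure_of W \<subseteq> A" unfolding U_def by blast
    then show ?thesis
    proof cases
      case 1 then show ?thesis using B[OF 1(1)] by simp
    next
      case 2 then have "X closure_of W - A = {}" by (rule Diff_eq_empty_iff[THEN iffD2])
      then show ?thesis by (metis countable_empty)
    qed
  qed
  hence "countable (\<Union>W\<in>V. X closure_of W - A)" using V(2) by (intro countable_UN) auto
  hence "countable C" using sub countable_subset by blast
  thus ?thesis using SC countable_subset by blast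
qed

theorem lemma3p1:
  fixes X :: "'a topology"
  assumes "uncountable (topspace X)"
    and "regular_space X" and "t1_space X"
    and "open_Whyburn X" and "K_Lindelof X"
  shows "Lusin_space X"
proof -
  note nd = nowhere_dense_countable[OF assms(2,4,5)]
  define I where "I = {x \<in> topspace X. openin X {x}}"
  have "countable I"
  proof (rule ccontr)
    assume unc: "uncountable I"
    hence inf: "infinite I" using countable_finite by blast
    have Itop: "I \<subseteq> topspace X" unfolding I_def by (rule Collect_subset)
    define N where "N = X closure_of I - I"
    have Iopen: "openin X I"
      unfolding I_def by (subst openin_subopen) blast
    have Nclosed: "closedin X N" unfolding N_def using Iopen by (simp add: closedin_diff)
    have "X interior_of N = {}"
    proof (rule ccontr)
      assume "X interior_of N \<noteq> {}"
      then obtain w where w: "w \<in> X interior_of N" by blast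
      have "openin X (X interior_of N)" by simp
      moreover have "X interior_of N \<subseteq> X closure_of I" using interior_of_subset N_def by fast
      ultimately have "X interior_of N \<inter> I \<noteq> {}"
        using openin_Int_closure_of_eq_empty[of X "X interior_of N" I] w by blast
      thus False using interior_of_subset[of X N] N_def by blast
    qed
    hence "nowhere_dense_in X N" unfolding nowhere_dense_in_def
      using Nclosed by (simp add: closedin_subset closure_of_closedin)
    hence cN: "countable N" using nd by blast
    obtain f where f: "bij_betw f (I \<times> I) I" using bij_self_times[OF inf] by blast
    define R where "R = (\<lambda>a. f ` ({a} \<times> I))"
    define bad where "bad = (\<lambda>p a. p \<notin> X closure_of (I - R a))"
    have RI: "R a \<subseteq> I" if "a \<in> I" for a using f that unfolding R_def bij_betw_def by auto
    have disj: "R a \<inter> R b = {}" if "a \<in> I" "b \<in> I" "a \<noteq> b" for a b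
    proof -
      { fix x assume "x \<in> R a" "x \<in> R b"
        then obtain i j where ij: "i \<in> I" "j \<in> I" "x = f (a,i)" "x = f (b,j)" unfolding R_def by auto
        hence "(a,i) = (b,j)" using inj_onD[OF bij_betw_imp_inj_on[OF f]] that by auto
        hence False using that by simp }
      thus ?thesis by blast
    qed
    have one: "a = b" if "p \<in> N" "a \<in> I" "b \<in> I" "bad p a" "bad p b" for p a b
    proof (rule ccontr)
      assume "a \<noteq> b"
      hence "(I - R a) \<union> (I - R b) = I" using disj that by blast
      hence "X closure_of I = X closure_of (I - R a) \<union> X closure_of (I - R b)"
        by (metis closure_of_Un)
      thus False using that unfolding bad_def N_def by blast
    qed
    have "{a \<in> I. \<exists>p\<in>N. bad p a} = (\<Union>p\<in>N. {a \<in> I. bad p a})" by blast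
    moreover have "countable {a \<in> I. bad p a}" if "p \<in> N" for p
    proof -
      show ?thesis
      proof (cases "{a \<in> I. bad p a} = {}")
        case True then show ?thesis by (metis countable_empty)
      next
        case False
        then obtain a0 where a0: "a0 \<in> I" "bad p a0" by blast
        have "{a \<in> I. bad p a} \<subseteq> {a0}"
        proof
          fix a assume "a \<in> {a \<in> I. bad p a}"
          hence aI: "a \<in> I" and ba: "bad p a" by auto
          have "a = a0" by (rule one[OF that aI a0(1) ba a0(2)])
          thus "a \<in> {a0}" by (rule ssubst) (rule singletonI)
        qed
        moreover have "countable {a0}" by (rule countable_insert) (rule countable_empty)
        ultimately show ?thesis by (rule countable_subset)
      qed
    qed
    moreover have "countable (\<Union>p\<in>N. {a \<in> I. bad p a})"
      using cN calculation(2) by (intro countable_UN) auto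
    ultimately have cb: "countable {a \<in> I. \<exists>p\<in>N. bad p a}" by simp
    have "\<not> I \<subseteq> {a \<in> I. \<exists>p\<in>N. bad p a}"
    proof
      assume "I \<subseteq> {a \<in> I. \<exists>p\<in>N. bad p a}"
      thus False using countable_subset[OF _ cb] unc by blast
    qed
    then obtain a where a: "a \<in> I" "\<forall>p\<in>N. \<not> bad p a" by blast
    define Ra where "Ra = R a"
    have RaI: "Ra \<subseteq> I" using RI a Ra_def by blast
    have uncR: "uncountable Ra"
    proof
      assume "countable Ra"
      moreover have "inj_on (\<lambda>x. f (a, x)) I" 
      proof (rule inj_onI)
        fix x y assume "x \<in> I" "y \<in> I" "f (a, x) = f (a, y)"
        thus "x = y" using inj_onD[OF bij_betw_imp_inj_on[OF f], of "(a,x)" "(a,y)"] a(1) by auto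
      qed
      moreover have "Ra = (\<lambda>x. f (a, x)) ` I" unfolding Ra_def R_def by auto
      ultimately show False using unc countable_image_inj_on by metis
    qed
    have sing_open: "openin X {x}" if "x \<in> I" for x using that unfolding I_def by simp
    have IR_open: "openin X (I - Ra)" by (subst openin_subopen) (auto simp: I_def)
    define U where "U = (\<lambda>x. {x}) ` I \<union> {I - Ra, topspace X - X closure_of I}"
    have "K_family X U"
      unfolding K_family_def
    proof
      show "\<forall>U\<in>U. openin X U" unfolding U_def using sing_open IR_open by (auto simp: openin_diff)
      show "topspace X = (\<Union>U\<in>U. X closure_of U)"
      proof
        show "(\<Union>U\<in>U. X closure_of U) \<subseteq> topspace X" using closure_of_subset_topspace by fast
        show "topspace X \<subseteq> (\<Union>U\<in>U. X closure_of U)"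
        proof
          fix y assume y: "y \<in> topspace X"
          consider "y \<in> I" | "y \<in> N" | "y \<notin> X closure_of I" unfolding N_def by blast
          then show "y \<in> (\<Union>U\<in>U. X closure_of U)"
          proof cases
            case 1
            have "y \<in> X closure_of {y}" using closure_of_subset[of "{y}" X] y by simp
            moreover have "{y} \<in> U" unfolding U_def using 1 by (intro UnI1 imageI)
            ultimately show ?thesis by (rule UN_I[rotated])
          next
            case 2
            hence "y \<in> X closure_of (I - Ra)" using a unfolding bad_def Ra_def by blast
            moreover have "I - Ra \<in> U" unfolding U_def by simp
            ultimately show ?thesis by (rule UN_I[rotated])
          next
            case 3
            hence "y \<in> X closure_of (topspace X - X closure_of I)"
              using y closure_of_subset[of "topspace X - X closure_of I" X] by blast
            moreover have "topspace X - X closure_of I \<in> U" unfolding U_def by simp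
            ultimately show ?thesis by (rule UN_I[rotated])
          qed
        qed
      qed
    qed
    then obtain V where V: "V \<subseteq> U" "countable V" "K_family X V"
      using assms(5) unfolding K_Lindelof_def by blast
    have RaT: "Ra \<subseteq> topspace X" using RaI Itop by (rule order_trans)
    have sub: "Ra \<subseteq> (\<Union>W\<in>V. X closure_of W \<inter> Ra)"
    proof
      fix r assume r: "r \<in> Ra"
      have "topspace X = (\<Union>W\<in>V. X closure_of W)" using V(3) unfolding K_family_def by (rule conjunct2)
      hence "r \<in> (\<Union>W\<in>V. X closure_of W)" using r RaT by blast
      then obtain W where "W \<in> V" "r \<in> X closure_of W" by (rule UN_E)
      thus "r \<in> (\<Union>W\<in>V. X closure_of W \<inter> Ra)" using r by blast
    qed
    have "countable (X closure_of W \<inter> Ra)" if "W \<in> V" for W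
    proof -
      have "W \<in> U" using that V by auto
      then consider x where "x \<in> I" "W = {x}" | "W = I - Ra" | "W = topspace X - X closure_of I"
        unfolding U_def by auto
      then show ?thesis
      proof cases
        case 1
        have "X closure_of {x} = {x}"
        proof -
          have "x \<in> topspace X" using 1(1) Itop by (rule subsetD[rotated])
          hence "closedin X {x}" using iffD1[OF t1_space_closedin_singleton assms(3)] by (rule bspec[rotated])
          thus ?thesis by (rule closure_of_closedin)
        qed
        then show ?thesis using 1(2) by simp
      next
        case 2
        have "Ra \<inter> X closure_of W = {}"
        proof (rule ccontr)
          assume "Ra \<inter> X closure_of W \<noteq> {}"
          then obtain r where r: "r \<in> Ra" "r \<in> X closure_of W" by blast
          have "{r} \<inter> X closure_of W = {}"
            using openin_Int_closure_of_eq_empty[OF sing_open, of r W] r RaI 2 by blast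
          thus False using r by blast
        qed
        then show ?thesis by (simp add: Int_commute)
      next
        case 3
        have "Ra \<inter> X closure_of W = {}"
        proof (rule ccontr)
          assume "Ra \<inter> X closure_of W \<noteq> {}"
          then obtain r where r: "r \<in> Ra" "r \<in> X closure_of W" by blast
          from Itop have "r \<in> X closure_of I" using r RaI closure_of_subset[of I X] by blast
          hence "{r} \<inter> W = {}" using 3 by blast
          hence "{r} \<inter> X closure_of W = {}"
            using openin_Int_closure_of_eq_empty[OF sing_open, of r W] r RaI by blast
          thus False using r by blast
        qed
        then show ?thesis by (simp add: Int_commute)
      qed
    qed
    hence "countable (\<Union>W\<in>V. X closure_of W \<inter> Ra)" using V(2) by (intro countable_UN) auto
    hence "countable Ra" using sub countable_subset by blast
    thus False using uncR by blast
  qed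
  moreover have "Hausdorff_space X" using assms(2,3) regular_t1_imp_Hausdorff_space by blast
  ultimately show ?thesis unfolding Lusin_space_def I_def[symmetric]
    using nd assms(1) by (intro conjI allI impI) auto
qed

end
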